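(* Let $X$ and $\Lambda$ be nonempty sets, $f: X\to\mathbb{R}$ a function, and $(f_\lambda)_{\lambda\in\Lambda}$ a family of real-valued functions on $X$ such that $(f_\lambda(x))_{\lambda\in\Lambda}\in\ell^\infty(\Lambda)$ for each $x\in X$. Then the family $(f_\lambda-f)_{\lambda\in\Lambda}$ is infsup-convex on $X$ if and only if for every $\alpha\in\mathbb{R}$ satisfying $f(x)+\alpha\le\sup_{\lambda\in\Lambda}f_\lambda(x)$ for all $x\in X$, there exists $\Phi\in\Delta_\Lambda$ such that $f(x)+\alpha\le\Phi((f_\lambda(x))_{\lambda\in\Lambda})$ for all $x\in X$.
   Context: For a nonempty set $\Lambda$, $\ell^\infty(\Lambda)$ is the real Banach space of bounded real-valued functions on $\Lambda$ (sup-norm), $\ell^\infty(\Lambda)^*$ its topological dual, and $\Delta_\Lambda:=\{\Phi\in\ell^\infty(\Lambda)^*:\ \Phi(\varphi)\le\sup_{\lambda\in\Lambda}\varphi(\lambda)\ \forall\varphi\in\ell^\infty(\Lambda)\}$. Let $\Delta_m:=\{(t_1,\dots,t_m)\in\mathbb{R}^m: t_j\ge0,\ \sum_j t_j=1\}$. A family $(g_\lambda)_{\lambda\in\Lambda}$ of real-valued functions on a nonempty set $X$ is infsup-convex on $X$ if for all $m\ge1$, $\mathbf{t}\in\Delta_m$ and $x_1,\dots,x_m\in X$: $\inf_{x\in X}\sup_{\lambda\in\Lambda}g_\lambda(x)\le\sup_{\lambda\in\Lambda}\sum_{j=1}^m t_j g_\lambda(x_j)$. *)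

theory Defs
  imports "HOL-Analysis.Analysis"
begin

text \<open>\<open>\<ell>\<^sup>\<infinity>(\<Lambda>)\<close>: bounded real functions on \<open>\<Lambda>\<close>, represented extensionally
  (value 0 outside \<open>\<Lambda>\<close>), with the sup-norm \<open>SUP l\<in>\<Lambda>. \<bar>\<phi> l\<bar>\<close>.\<close>
definition linf :: "'l set \<Rightarrow> ('l \<Rightarrow> real) set" where
  "linf \<Lambda> = {\<phi>. bdd_above ((\<lambda>l. \<bar>\<phi> l\<bar>) ` \<Lambda>) \<and> (\<forall>l. l \<notin> \<Lambda> \<longrightarrow> \<phi> l = 0)}"

definition linf_norm :: "'l set \<Rightarrow> ('l \<Rightarrow> real) \<Rightarrow> real" where
  "linf_norm \<Lambda> \<phi> = (SUP l\<in>\<Lambda>. \<bar>\<phi> l\<bar>)"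

definition linf_dual :: "'l set \<Rightarrow> (('l \<Rightarrow> real) \<Rightarrow> real) set" where
  "linf_dual \<Lambda> = {\<Phi>.
     (\<forall>\<phi>\<in>linf \<Lambda>. \<forall>\<psi>\<in>linf \<Lambda>. \<forall>a b::real.
        \<Phi> (\<lambda>l. a * \<phi> l + b * \<psi> l) = a * \<Phi> \<phi> + b * \<Phi> \<psi>) \<and>
     (\<exists>C. \<forall>\<phi>\<in>linf \<Lambda>. \<bar>\<Phi> \<phi>\<bar> \<le> C * linf_norm \<Lambda> \<phi>)}"

definition Delta_set :: "'l set \<Rightarrow> (('l \<Rightarrow> real) \<Rightarrow> real) set" where
  "Delta_set \<Lambda> = {\<Phi> \<in> linf_dual \<Lambda>. \<forall>\<phi>\<in>linf \<Lambda>. \<Phi> \<phi> \<le> (SUP l\<in>\<Lambda>. \<phi> l)}"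

text \<open>Infsup-convexity; the infimum over \<open>X\<close> is taken in the extended reals
  (it may be \<open>-\<infinity>\<close>).\<close>
definition infsup_convex :: "'x set \<Rightarrow> 'l set \<Rightarrow> ('l \<Rightarrow> 'x \<Rightarrow> real) \<Rightarrow> bool" where
  "infsup_convex X \<Lambda> g \<longleftrightarrow>
     (\<forall>m::nat. \<forall>t::nat \<Rightarrow> real. \<forall>xs::nat \<Rightarrow> 'x.
        m \<ge> 1 \<and> (\<forall>j\<in>{1..m}. t j \<ge> 0) \<and> (\<Sum>j=1..m. t j) = 1 \<and> (\<forall>j\<in>{1..m}. xs j \<in> X) \<longrightarrow>
        (INF x\<in>X. SUP l\<in>\<Lambda>. ereal (g l x)) \<le> (SUP l\<in>\<Lambda>. ereal (\<Sum>j=1..m. t j * g l (xs j))))"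

end

theory Submission
  imports Defs
begin


definition subl :: "('l\<Rightarrow>real) set \<Rightarrow> (('l\<Rightarrow>real)\<Rightarrow>real) \<Rightarrow> bool" where
"subl V r \<longleftrightarrow> (\<forall>\<phi>\<in>V. \<forall>\<psi>\<in>V. r (\<lambda>l. \<phi> l + \<psi> l) \<le> r \<phi> + r \<psi>) \<and>
   (\<forall>c \<phi>. \<phi>\<in>V \<longrightarrow> 0 \<le> c \<longrightarrow> r (\<lambda>l. c * \<phi> l) = c * r \<phi>)"

lemma cINF_cmult:
  fixes g :: "'a \<Rightarrow> real"
  assumes "A \<noteq> {}" "bdd_below (g ` A)" "0 \<le> c"
  shows "(INF a\<in>A. c * g a) = c * (INF a\<in>A. g a)"
proof (cases "c = 0")
  case True then show ?thesis using assms by simp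
next
  case False
  then have c: "c > 0" using assms by simp
  obtain b where b: "\<And>a. a\<in>A \<Longrightarrow> b \<le> g a" using assms(2) by (auto simp: bdd_below_def)
  have bd: "bdd_below ((\<lambda>a. c * g a) ` A)"
    by (rule bdd_belowI2[of _ "c*b"]) (use b c in \<open>simp add: mult_left_mono\<close>)
  show ?thesis
  proof (rule antisym)
    have "(INF a\<in>A. c * g a) / c \<le> (INF a\<in>A. g a)"
    proof (rule cINF_greatest[OF assms(1)])
      fix a assume "a \<in> A"
      then have "(INF a\<in>A. c * g a) \<le> c * g a" by (rule cINF_lower[OF bd])
      then show "(INF a\<in>A. c * g a) / c \<le> g a" using c by (simp add: divide_le_eq mult.commute)
    qed
    then show "(INF a\<in>A. c * g a) \<le> c * (INF a\<in>A. g a)" using c by (simp add: divide_le_eq mult.commute)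
  next
    show "c * (INF a\<in>A. g a) \<le> (INF a\<in>A. c * g a)"
    proof (rule cINF_greatest[OF assms(1)])
      fix a assume "a \<in> A"
      then have "(INF a\<in>A. g a) \<le> g a" by (rule cINF_lower[OF assms(2)])
      then show "c * (INF a\<in>A. g a) \<le> c * g a" using c by simp
    qed
  qed
qed

locale vsp =
  fixes V :: "('l \<Rightarrow> real) set"
  assumes vadd: "\<phi>\<in>V \<Longrightarrow> \<psi>\<in>V \<Longrightarrow> (\<lambda>l. \<phi> l + \<psi> l) \<in> V"
    and vsc: "\<phi>\<in>V \<Longrightarrow> (\<lambda>l. c * \<phi> l) \<in> V"
    and vne: "V \<noteq> {}"
begin

lemma vzero: "(\<lambda>l. 0) \<in> V"
proof -
  obtain \<phi> where "\<phi> \<in> V" using vne by auto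
  from vsc[OF this, of 0] show ?thesis by simp
qed

lemma vneg: "\<phi>\<in>V \<Longrightarrow> (\<lambda>l. - \<phi> l) \<in> V"
  using vsc[of \<phi> "-1"] by simp

lemma subl_add: "subl V r \<Longrightarrow> \<phi>\<in>V \<Longrightarrow> \<psi>\<in>V \<Longrightarrow> r (\<lambda>l. \<phi> l + \<psi> l) \<le> r \<phi> + r \<psi>"
  by (auto simp: subl_def)

lemma subl_sc: "subl V r \<Longrightarrow> \<phi>\<in>V \<Longrightarrow> 0 \<le> c \<Longrightarrow> r (\<lambda>l. c * \<phi> l) = c * r \<phi>"
  by (auto simp: subl_def)

lemma subl_zero: "subl V r \<Longrightarrow> r (\<lambda>l. 0) = 0"
  using subl_sc[of r "\<lambda>l. 0" 0] vzero by simp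

lemma subl_neg: "subl V r \<Longrightarrow> \<phi>\<in>V \<Longrightarrow> - r (\<lambda>l. - \<phi> l) \<le> r \<phi>"
  using subl_add[of r \<phi> "\<lambda>l. - \<phi> l"] vneg[of \<phi>] subl_zero[of r] by simp

lemma chain_inf:
  assumes C: "C \<noteq> {}" and Cs: "\<forall>r\<in>C. subl V r \<and> (\<forall>\<phi>\<in>V. r \<phi> \<le> q \<phi>)" and q: "subl V q"
    and ch: "\<forall>a\<in>C. \<forall>b\<in>C. (\<forall>\<phi>\<in>V. a \<phi> \<le> b \<phi>) \<or> (\<forall>\<phi>\<in>V. b \<phi> \<le> a \<phi>)"
  shows "subl V (\<lambda>\<phi>. INF r\<in>C. r \<phi>)" and "\<And>r \<phi>. r\<in>C \<Longrightarrow> \<phi>\<in>V \<Longrightarrow> (INF r\<in>C. r \<phi>) \<le> r \<phi>"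
proof -
  have bd: "bdd_below ((\<lambda>r. r \<phi>) ` C)" if "\<phi>\<in>V" for \<phi>
  proof (rule bdd_belowI2[of _ "- q (\<lambda>l. - \<phi> l)"])
    fix r assume "r \<in> C"
    then have "- r (\<lambda>l. - \<phi> l) \<le> r \<phi>" "r (\<lambda>l. - \<phi> l) \<le> q (\<lambda>l. - \<phi> l)"
      using Cs subl_neg that vneg by auto
    then show "- q (\<lambda>l. - \<phi> l) \<le> r \<phi>" by linarith
  qed
  show low: "(INF r\<in>C. r \<phi>) \<le> r \<phi>" if "r\<in>C" "\<phi>\<in>V" for r \<phi>
    using cINF_lower[OF bd[OF that(2)] that(1)] .
  show "subl V (\<lambda>\<phi>. INF r\<in>C. r \<phi>)"
    unfolding subl_def
  proof (intro conjI ballI allI impI)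
    fix \<phi> \<psi> assume \<phi>: "\<phi>\<in>V" and \<psi>: "\<psi>\<in>V"
    have key: "(INF r\<in>C. r (\<lambda>l. \<phi> l + \<psi> l)) \<le> r1 \<phi> + r2 \<psi>" if "r1 \<in> C" "r2 \<in> C" for r1 r2
    proof -
      have "\<exists>r\<in>C. r \<phi> \<le> r1 \<phi> \<and> r \<psi> \<le> r2 \<psi>"
        using ch \<phi> \<psi> that by blast
      then obtain r where r: "r\<in>C" "r \<phi> \<le> r1 \<phi>" "r \<psi> \<le> r2 \<psi>" by blast
      have "(INF r\<in>C. r (\<lambda>l. \<phi> l + \<psi> l)) \<le> r (\<lambda>l. \<phi> l + \<psi> l)"
        using low[OF r(1) vadd[OF \<phi> \<psi>]] .
      also have "\<dots> \<le> r \<phi> + r \<psi>" using subl_add[OF _ \<phi> \<psi>, of r] Cs r(1) by blast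
      finally show ?thesis using r by linarith
    qed
    have "(INF r\<in>C. r (\<lambda>l. \<phi> l + \<psi> l)) - (INF r\<in>C. r \<phi>) \<le> r2 \<psi>" if "r2 \<in> C" for r2
    proof -
      have "(INF r\<in>C. r (\<lambda>l. \<phi> l + \<psi> l)) - r2 \<psi> \<le> (INF r\<in>C. r \<phi>)"
        by (rule cINF_greatest[OF C]) (use key that in force)
      then show ?thesis by linarith
    qed
    then have "(INF r\<in>C. r (\<lambda>l. \<phi> l + \<psi> l)) - (INF r\<in>C. r \<phi>) \<le> (INF r\<in>C. r \<psi>)"
      by (intro cINF_greatest[OF C])
    then show "(INF r\<in>C. r (\<lambda>l. \<phi> l + \<psi> l)) \<le> (INF r\<in>C. r \<phi>) + (INF r\<in>C. r \<psi>)" by linarith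
  next
    fix c :: real and \<phi> assume \<phi>: "\<phi>\<in>V" and c: "0 \<le> c"
    have "(INF r\<in>C. r (\<lambda>l. c * \<phi> l)) = (INF r\<in>C. c * r \<phi>)"
      by (rule INF_cong) (use Cs subl_sc \<phi> c in auto)
    also have "\<dots> = c * (INF r\<in>C. r \<phi>)" by (rule cINF_cmult[OF C bd[OF \<phi>] c])
    finally show "(INF r\<in>C. r (\<lambda>l. c * \<phi> l)) = c * (INF r\<in>C. r \<phi>)" .
  qed
qed

lemma min_neg:
  assumes r: "subl V r" and minr: "\<And>r'. subl V r' \<Longrightarrow> (\<forall>\<phi>\<in>V. r' \<phi> \<le> r \<phi>) \<Longrightarrow> (\<forall>\<phi>\<in>V. r' \<phi> = r \<phi>)"
    and y: "y \<in> V"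
  shows "r (\<lambda>l. - y l) = - r y"
proof -
  define r' where "r' = (\<lambda>x. INF t\<in>{0::real..}. r (\<lambda>l. x l + t * y l) - t * r y)"
  have T: "{0::real..} \<noteq> {}" by auto
  have r'a: "\<And>x. r' x = (INF t\<in>{0::real..}. r (\<lambda>l. x l + t * y l) - t * r y)"
    unfolding r'_def by simp
  have bd: "bdd_below ((\<lambda>t. r (\<lambda>l. x l + t * y l) - t * r y) ` {0..})" if x: "x \<in> V" for x
  proof (rule bdd_belowI2[of _ "- r (\<lambda>l. - x l)"])
    fix t :: real assume t: "t \<in> {0..}"
    have xt: "(\<lambda>l. x l + t * y l) \<in> V" using vadd vsc x y by blast
    have eq0: "(\<lambda>l. (x l + t * y l) + - x l) = (\<lambda>l. t * y l)" by auto
    have "r (\<lambda>l. t * y l) \<le> r (\<lambda>l. x l + t * y l) + r (\<lambda>l. - x l)"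
      using subl_add[OF r xt vneg[OF x]] by (simp add: eq0)
    moreover have "r (\<lambda>l. t * y l) = t * r y" using subl_sc[OF r y] t by auto
    ultimately show "- r (\<lambda>l. - x l) \<le> r (\<lambda>l. x l + t * y l) - t * r y" by linarith
  qed
  have low: "r' x \<le> r (\<lambda>l. x l + t * y l) - t * r y" if "x \<in> V" "0 \<le> t" for x t
    unfolding r'_def by (rule cINF_lower[OF bd[OF that(1)]]) (use that in auto)
  have le: "\<forall>\<phi>\<in>V. r' \<phi> \<le> r \<phi>"
    using low[of _ 0] by simp
  have sub: "subl V r'"
    unfolding subl_def
  proof (intro conjI ballI allI impI)
    fix x1 x2 assume x1: "x1 \<in> V" and x2: "x2 \<in> V"
    have key: "r' (\<lambda>l. x1 l + x2 l) \<le> (r (\<lambda>l. x1 l + t1 * y l) - t1 * r y) + (r (\<lambda>l. x2 l + t2 * y l) - t2 * r y)"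
      if t: "0 \<le> t1" "0 \<le> t2" for t1 t2
    proof -
      have "r' (\<lambda>l. x1 l + x2 l) \<le> r (\<lambda>l. (x1 l + x2 l) + (t1 + t2) * y l) - (t1 + t2) * r y"
        using low[OF vadd[OF x1 x2], of "t1 + t2"] t by simp
      also have "(\<lambda>l. (x1 l + x2 l) + (t1 + t2) * y l) = (\<lambda>l. (x1 l + t1 * y l) + (x2 l + t2 * y l))"
        by (auto simp: algebra_simps)
      also have "r \<dots> \<le> r (\<lambda>l. x1 l + t1 * y l) + r (\<lambda>l. x2 l + t2 * y l)"
        using subl_add[OF r, of "\<lambda>l. x1 l + t1 * y l" "\<lambda>l. x2 l + t2 * y l"] vadd vsc x1 x2 y by auto
      finally show ?thesis by (simp add: algebra_simps)
    qed
    have "r' (\<lambda>l. x1 l + x2 l) - r' x1 \<le> r (\<lambda>l. x2 l + t2 * y l) - t2 * r y" if t2: "t2 \<in> {0..}" for t2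
    proof -
      have "r' (\<lambda>l. x1 l + x2 l) - (r (\<lambda>l. x2 l + t2 * y l) - t2 * r y) \<le> r' x1"
        unfolding r'a[of x1] by (rule cINF_greatest[OF T]) (use key t2 in force)
      then show ?thesis by linarith
    qed
    then have "r' (\<lambda>l. x1 l + x2 l) - r' x1 \<le> r' x2"
      unfolding r'a[of x2] by (intro cINF_greatest[OF T])
    then show "r' (\<lambda>l. x1 l + x2 l) \<le> r' x1 + r' x2" by linarith
  next
    fix c :: real and x assume x: "x \<in> V" and c: "0 \<le> c"
    show "r' (\<lambda>l. c * x l) = c * r' x"
    proof (cases "c = 0")
      case True
      have "r' (\<lambda>l. 0) = (INF t\<in>{0::real..}. 0)"
        unfolding r'_def by (rule INF_cong) (use subl_sc[OF r y] in auto)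
      then show ?thesis using True by simp
    next
      case False
      with c have c: "c > 0" by simp
      have cx: "(\<lambda>l. c * x l) \<in> V" using vsc x .
      have eq: "r (\<lambda>l. c * x l + t * y l) - t * r y = c * (r (\<lambda>l. x l + (t / c) * y l) - (t / c) * r y)" if "0 \<le> t" for t
      proof -
        have "(\<lambda>l. c * x l + t * y l) = (\<lambda>l. c * (x l + (t / c) * y l))"
          using c by (auto simp: algebra_simps)
        moreover have mem: "(\<lambda>l. x l + (t / c) * y l) \<in> V" using vadd[OF x vsc[OF y]] .
        moreover have "r (\<lambda>l. c * (x l + (t / c) * y l)) = c * r (\<lambda>l. x l + (t / c) * y l)"
          using subl_sc[OF r mem, of c] c by simp
        ultimately show ?thesis using c by (simp add: algebra_simps)
      qed
      show ?thesis
      proof (rule antisym)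
        have "r' (\<lambda>l. c * x l) / c \<le> r (\<lambda>l. x l + s * y l) - s * r y" if s: "s \<in> {0..}" for s
        proof -
          have "r' (\<lambda>l. c * x l) \<le> r (\<lambda>l. c * x l + (c * s) * y l) - (c * s) * r y"
            using low[OF cx, of "c * s"] c s by auto
          also have "\<dots> = c * (r (\<lambda>l. x l + s * y l) - s * r y)"
            using eq[of "c * s"] c s by simp
          finally show ?thesis using c by (simp add: divide_le_eq mult.commute)
        qed
        then have "r' (\<lambda>l. c * x l) / c \<le> r' x"
          unfolding r'a[of x] by (intro cINF_greatest[OF T])
        then show "r' (\<lambda>l. c * x l) \<le> c * r' x" using c by (simp add: divide_le_eq mult.commute)
      next
        show "c * r' x \<le> r' (\<lambda>l. c * x l)"
          unfolding r'a[of "\<lambda>l. c * x l"]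
        proof (rule cINF_greatest[OF T])
          fix t :: real assume t: "t \<in> {0..}"
          have "r' x \<le> r (\<lambda>l. x l + (t / c) * y l) - (t / c) * r y"
            using low[OF x, of "t / c"] c t by auto
          then have "c * r' x \<le> c * (r (\<lambda>l. x l + (t / c) * y l) - (t / c) * r y)"
            using c by simp
          then show "c * r' x \<le> r (\<lambda>l. c * x l + t * y l) - t * r y"
            using eq[of t] t by simp
        qed
      qed
    qed
  qed
  have "r' (\<lambda>l. - y l) = r (\<lambda>l. - y l)" using minr[OF sub le] vneg[OF y] by blast
  moreover have "r' (\<lambda>l. - y l) \<le> r (\<lambda>l. - y l + 1 * y l) - 1 * r y"
    using low[OF vneg[OF y], of 1] by simp
  ultimately have "r (\<lambda>l. - y l) \<le> - r y" using subl_zero[OF r] by simp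
  with subl_neg[OF r y] show ?thesis by linarith
qed

lemma min_linear:
  assumes r: "subl V r" and minr: "\<And>r'. subl V r' \<Longrightarrow> (\<forall>\<phi>\<in>V. r' \<phi> \<le> r \<phi>) \<Longrightarrow> (\<forall>\<phi>\<in>V. r' \<phi> = r \<phi>)"
    and \<phi>: "\<phi> \<in> V" and \<psi>: "\<psi> \<in> V"
  shows "r (\<lambda>l. a * \<phi> l + b * \<psi> l) = a * r \<phi> + b * r \<psi>"
proof -
  have neg: "\<And>y. y \<in> V \<Longrightarrow> r (\<lambda>l. - y l) = - r y"
    using min_neg[OF r] minr by meson
  have addr: "r (\<lambda>l. x l + z l) = r x + r z" if x: "x \<in> V" and z: "z \<in> V" for x z
  proof -
    have eq0: "(\<lambda>l. - x l + - z l) = (\<lambda>l. - (x l + z l))" by auto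
    have "r (\<lambda>l. - (x l + z l)) \<le> r (\<lambda>l. - x l) + r (\<lambda>l. - z l)"
      using subl_add[OF r vneg[OF x] vneg[OF z]] by (simp only: eq0)
    moreover have "r (\<lambda>l. - (x l + z l)) = - r (\<lambda>l. x l + z l)"
      using neg[of "\<lambda>l. x l + z l"] vadd[OF x z] by simp
    ultimately show ?thesis using subl_add[OF r x z] neg[OF x] neg[OF z] by linarith
  qed
  have scr: "r (\<lambda>l. c * x l) = c * r x" if x: "x \<in> V" for x c
  proof (cases "0 \<le> c")
    case True then show ?thesis using subl_sc[OF r x] by simp
  next
    case False
    have m: "(\<lambda>l. (- c) * x l) \<in> V" by (rule vsc[OF x])
    have eq: "(\<lambda>l. - ((- c) * x l)) = (\<lambda>l. c * x l)" by auto
    have "r (\<lambda>l. c * x l) = - r (\<lambda>l. (- c) * x l)"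
      using neg[OF m] by (simp only: eq)
    also have "\<dots> = c * r x" using subl_sc[OF r x, of "- c"] False by simp
    finally show ?thesis .
  qed
  show ?thesis using addr[OF vsc[OF \<phi>] vsc[OF \<psi>], of a b] scr[OF \<phi>] scr[OF \<psi>] by simp
qed

lemma subl_norm: "subl V r \<Longrightarrow> subl V (\<lambda>\<phi>. if \<phi> \<in> V then r \<phi> else 0)"
  unfolding subl_def using vadd vsc by auto

lemma hb_core:
  assumes q: "subl V q"
  shows "\<exists>L. (\<forall>\<phi>\<in>V. \<forall>\<psi>\<in>V. \<forall>a b. L (\<lambda>l. a * \<phi> l + b * \<psi> l) = a * L \<phi> + b * L \<psi>) \<and> (\<forall>\<phi>\<in>V. L \<phi> \<le> q \<phi>)"
proof -
  define S where "S = {r. subl V r \<and> (\<forall>\<phi>\<in>V. r \<phi> \<le> q \<phi>) \<and> (\<forall>\<phi>. \<phi> \<notin> V \<longrightarrow> r \<phi> = 0)}"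
  define R where "R = {(r, r'). r\<in>S \<and> r'\<in>S \<and> (\<forall>\<phi>\<in>V. r' \<phi> \<le> r \<phi>)}"
  have q0: "(\<lambda>\<phi>. if \<phi> \<in> V then q \<phi> else 0) \<in> S"
    unfolding S_def using subl_norm[OF q] by auto
  have FR: "Field R = S" unfolding Field_def R_def by auto
  have antiS: "r = r'" if "r \<in> S" "r' \<in> S" "\<forall>\<phi>\<in>V. r' \<phi> \<le> r \<phi>" "\<forall>\<phi>\<in>V. r \<phi> \<le> r' \<phi>" for r r'
  proof (rule ext)
    fix \<phi> show "r \<phi> = r' \<phi>"
      using that unfolding S_def by (cases "\<phi> \<in> V") (auto intro: antisym)
  qed
  have po: "Partial_order R"
    unfolding FR partial_order_on_def preorder_on_def refl_on_def trans_def antisym_def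
    by (auto simp: R_def intro: order_trans antiS)
  have ub: "\<exists>u\<in>Field R. \<forall>a\<in>C. (a, u) \<in> R" if C: "C \<in> Chains R" for C
  proof (cases "C = {}")
    case True then show ?thesis using q0 FR by auto
  next
    case False
    have CS: "a \<in> S" if "a \<in> C" for a
      using C that unfolding Chains_def R_def by auto
    have ch: "(\<forall>\<phi>\<in>V. a \<phi> \<le> b \<phi>) \<or> (\<forall>\<phi>\<in>V. b \<phi> \<le> a \<phi>)" if "a \<in> C" "b \<in> C" for a b
      using C that unfolding Chains_def R_def by auto
    have Cs: "subl V r \<and> (\<forall>\<phi>\<in>V. r \<phi> \<le> q \<phi>)" if "r \<in> C" for r
      using CS[OF that] unfolding S_def by auto

    have Cs': "\<forall>r\<in>C. subl V r \<and> (\<forall>\<phi>\<in>V. r \<phi> \<le> q \<phi>)" using Cs by blast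
    have ch': "\<forall>a\<in>C. \<forall>b\<in>C. (\<forall>\<phi>\<in>V. a \<phi> \<le> b \<phi>) \<or> (\<forall>\<phi>\<in>V. b \<phi> \<le> a \<phi>)" using ch by blast
    note ci = chain_inf[OF False Cs' q ch']
    define u where "u = (\<lambda>\<phi>. if \<phi> \<in> V then (INF r\<in>C. r \<phi>) else 0)"
    obtain r0 where r0: "r0 \<in> C" using False by auto
    have "u \<in> S"
      unfolding S_def u_def
    proof (intro CollectI conjI ballI allI impI)
      show "subl V (\<lambda>\<phi>. if \<phi> \<in> V then INF r\<in>C. r \<phi> else 0)"
        using subl_norm[OF ci(1)] .
      fix \<phi> assume "\<phi> \<in> V"
      then show "(if \<phi> \<in> V then INF r\<in>C. r \<phi> else 0) \<le> q \<phi>"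
        using ci(2)[OF r0] Cs[OF r0] by fastforce
    qed simp
    moreover have "\<forall>a\<in>C. (a, u) \<in> R"
      using CS ci(2) \<open>u \<in> S\<close> unfolding R_def u_def by auto
    ultimately show ?thesis using FR by auto
  qed
  obtain m where m: "m \<in> S" and mmax: "\<And>a. a \<in> S \<Longrightarrow> (m, a) \<in> R \<Longrightarrow> a = m"
    using Zorns_po_lemma[OF po ub] FR by auto
  have msub: "subl V m" and mq: "\<forall>\<phi>\<in>V. m \<phi> \<le> q \<phi>" using m unfolding S_def by auto
  have minr: "\<forall>\<phi>\<in>V. r' \<phi> = m \<phi>" if r': "subl V r'" "\<forall>\<phi>\<in>V. r' \<phi> \<le> m \<phi>" for r'
  proof -
    define a where "a = (\<lambda>\<phi>. if \<phi> \<in> V then r' \<phi> else 0)"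
    have aS: "a \<in> S" unfolding S_def a_def using subl_norm[OF r'(1)] r'(2) mq by fastforce
    have "(m, a) \<in> R" unfolding R_def using aS m r'(2) by (auto simp: a_def)
    then have "a = m" using mmax aS by blast
    show ?thesis
    proof
      fix \<phi> assume "\<phi> \<in> V"
      then show "r' \<phi> = m \<phi>" using fun_cong[OF \<open>a = m\<close>, of \<phi>] by (simp add: a_def)
    qed
  qed
  show ?thesis
  proof (intro exI[of _ m] conjI ballI allI)
    fix \<phi> \<psi> a b assume \<phi>: "\<phi> \<in> V" and \<psi>: "\<psi> \<in> V"
    show "m (\<lambda>l. a * \<phi> l + b * \<psi> l) = a * m \<phi> + b * m \<psi>"
      by (rule min_linear[OF msub _ \<phi> \<psi>]) (rule minr)
  qed (use mq in auto)
qed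

end


lemma cSUP_cmult:
  fixes g :: "'a \<Rightarrow> real"
  assumes A: "A \<noteq> {}" and bd0: "bdd_above (g ` A)" and c0: "0 \<le> c"
  shows "(SUP a\<in>A. c * g a) = c * (SUP a\<in>A. g a)"
proof (cases "c = 0")
  case True then show ?thesis using A by simp
next
  case False
  then have c: "c > 0" using c0 by simp
  obtain b where b: "\<And>a. a\<in>A \<Longrightarrow> g a \<le> b" using bd0 by (auto simp: bdd_above_def)
  have bd: "bdd_above ((\<lambda>a. c * g a) ` A)"
    by (rule bdd_aboveI2[where M="c*b"]) (use b c in \<open>simp add: mult_left_mono\<close>)
  show ?thesis
  proof (rule antisym)
    show "(SUP a\<in>A. c * g a) \<le> c * (SUP a\<in>A. g a)"
    proof (rule cSUP_least[OF A])
      fix a assume "a \<in> A"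
      then have "g a \<le> (SUP a\<in>A. g a)" by (rule cSUP_upper[OF _ bd0])
      then show "c * g a \<le> c * (SUP a\<in>A. g a)" using c by simp
    qed
  next
    show "c * (SUP a\<in>A. g a) \<le> (SUP a\<in>A. c * g a)"
    proof -
      have "(SUP a\<in>A. g a) \<le> (SUP a\<in>A. c * g a) / c"
      proof (rule cSUP_least[OF A])
        fix a assume "a \<in> A"
        then have "c * g a \<le> (SUP a\<in>A. c * g a)" by (rule cSUP_upper[OF _ bd])
        then show "g a \<le> (SUP a\<in>A. c * g a) / c" using c by (simp add: le_divide_eq mult.commute)
      qed
      then show ?thesis using c by (simp add: le_divide_eq mult.commute)
    qed
  qed
qed

lemma cSUP_addc:
  fixes g :: "'a \<Rightarrow> real"
  assumes "A \<noteq> {}" "bdd_above (g ` A)"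
  shows "(SUP a\<in>A. g a + k) = (SUP a\<in>A. g a) + k"
proof (rule antisym)
  show "(SUP a\<in>A. g a + k) \<le> (SUP a\<in>A. g a) + k"
    by (rule cSUP_least[OF assms(1)]) (use cSUP_upper[OF _ assms(2)] in auto)
  have bd: "bdd_above ((\<lambda>a. g a + k) ` A)" using assms(2)
    by (auto simp: bdd_above_def) (metis add_le_cancel_right)
  have "(SUP a\<in>A. g a) \<le> (SUP a\<in>A. g a + k) - k"
    by (rule cSUP_least[OF assms(1)]) (use cSUP_upper[OF _ bd] in force)
  then show "(SUP a\<in>A. g a) + k \<le> (SUP a\<in>A. g a + k)" by simp
qed

lemma ereal_SUP_bdd:
  fixes g :: "'a \<Rightarrow> real"
  assumes "A \<noteq> {}" "bdd_above (g ` A)"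
  shows "(SUP a\<in>A. ereal (g a)) = ereal (SUP a\<in>A. g a)"
proof -
  obtain a0 where a0: "a0 \<in> A" using assms by auto
  have "(SUP a\<in>A. ereal (g a)) \<le> ereal (SUP a\<in>A. g a)"
    by (rule SUP_least) (use cSUP_upper[OF _ assms(2)] in auto)
  moreover have "ereal (g a0) \<le> (SUP a\<in>A. ereal (g a))" using a0 by (rule SUP_upper)
  ultimately have "\<bar>SUP a\<in>A. ereal (g a)\<bar> \<noteq> \<infinity>" by auto
  then show ?thesis using ereal_SUP by metis
qed

lemma linf_bdd: "\<phi> \<in> linf \<Lambda> \<Longrightarrow> bdd_above (\<phi> ` \<Lambda>)"
  unfolding linf_def bdd_above_def by auto (meson abs_ge_self order_trans)

lemma linf_add: "\<phi> \<in> linf \<Lambda> \<Longrightarrow> \<psi> \<in> linf \<Lambda> \<Longrightarrow> (\<lambda>l. \<phi> l + \<psi> l) \<in> linf \<Lambda>"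
proof -
  assume a: "\<phi> \<in> linf \<Lambda>" "\<psi> \<in> linf \<Lambda>"
  then obtain B1 B2 where "\<forall>l\<in>\<Lambda>. \<bar>\<phi> l\<bar> \<le> B1" "\<forall>l\<in>\<Lambda>. \<bar>\<psi> l\<bar> \<le> B2"
    unfolding linf_def bdd_above_def by auto
  then have "\<forall>l\<in>\<Lambda>. \<bar>\<phi> l + \<psi> l\<bar> \<le> B1 + B2" by (meson abs_triangle_ineq add_mono order_trans)
  then show ?thesis using a unfolding linf_def bdd_above_def by auto
qed

lemma linf_sc: "\<phi> \<in> linf \<Lambda> \<Longrightarrow> (\<lambda>l. c * \<phi> l) \<in> linf \<Lambda>"
proof -
  assume a: "\<phi> \<in> linf \<Lambda>"
  then obtain B where "\<forall>l\<in>\<Lambda>. \<bar>\<phi> l\<bar> \<le> B"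
    unfolding linf_def bdd_above_def by auto
  then have "\<forall>l\<in>\<Lambda>. \<bar>c * \<phi> l\<bar> \<le> \<bar>c\<bar> * B" by (simp add: abs_mult mult_left_mono)
  then show ?thesis using a unfolding linf_def bdd_above_def by auto
qed

lemma linf_zero: "(\<lambda>l. 0) \<in> linf \<Lambda>"
  unfolding linf_def by auto

lemma vsp_linf: "vsp (linf \<Lambda>)"
  by unfold_locales (auto intro: linf_add linf_sc linf_zero)

lemma subl_p:
  assumes "\<Lambda> \<noteq> {}"
  shows "subl (linf \<Lambda>) (\<lambda>\<phi>. SUP l\<in>\<Lambda>. \<phi> l)"
  unfolding subl_def
proof (intro conjI ballI allI impI)
  fix \<phi> \<psi> assume a: "\<phi> \<in> linf \<Lambda>" "\<psi> \<in> linf \<Lambda>"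
  show "(SUP l\<in>\<Lambda>. \<phi> l + \<psi> l) \<le> (SUP l\<in>\<Lambda>. \<phi> l) + (SUP l\<in>\<Lambda>. \<psi> l)"
    by (rule cSUP_least[OF assms]) (use cSUP_upper[OF _ linf_bdd[OF a(1)]] cSUP_upper[OF _ linf_bdd[OF a(2)]] in \<open>auto intro: add_mono\<close>)
next
  fix c :: real and \<phi> assume "\<phi> \<in> linf \<Lambda>" "0 \<le> c"
  then show "(SUP l\<in>\<Lambda>. c * \<phi> l) = c * (SUP l\<in>\<Lambda>. \<phi> l)"
    using cSUP_cmult[OF assms linf_bdd] by blast
qed

lemma p_le_norm:
  assumes "\<Lambda> \<noteq> {}" "\<phi> \<in> linf \<Lambda>"
  shows "(SUP l\<in>\<Lambda>. \<phi> l) \<le> linf_norm \<Lambda> \<phi>"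
  unfolding linf_norm_def
proof (rule cSUP_mono[OF assms(1)])
  show "bdd_above ((\<lambda>l. \<bar>\<phi> l\<bar>) ` \<Lambda>)" using assms(2) by (simp add: linf_def)
  fix n assume "n \<in> \<Lambda>" then show "\<exists>m\<in>\<Lambda>. \<phi> n \<le> \<bar>\<phi> m\<bar>" by (intro bexI[of _ n]) auto
qed

lemma linf_norm_neg: "linf_norm \<Lambda> (\<lambda>l. - \<phi> l) = linf_norm \<Lambda> \<phi>"
  unfolding linf_norm_def by simp



context vsp begin

lemma inf_subl:
  fixes p :: "('l\<Rightarrow>real)\<Rightarrow>real" and T :: "'t set" and ad :: "'t\<Rightarrow>'t\<Rightarrow>'t"
    and scl :: "real\<Rightarrow>'t\<Rightarrow>'t" and g :: "'t\<Rightarrow>'l\<Rightarrow>real" and B :: "'t\<Rightarrow>real"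
  assumes p: "subl V p"
    and t0: "t0 \<in> T" "g t0 = (\<lambda>l. 0)" "B t0 = 0"
    and gV: "\<And>t. t\<in>T \<Longrightarrow> g t \<in> V"
    and adT: "\<And>s t. s\<in>T \<Longrightarrow> t\<in>T \<Longrightarrow> ad s t \<in> T"
    and sclT: "\<And>c t. t\<in>T \<Longrightarrow> 0 < c \<Longrightarrow> scl c t \<in> T"
    and gad: "\<And>s t. s\<in>T \<Longrightarrow> t\<in>T \<Longrightarrow> g (ad s t) = (\<lambda>l. g s l + g t l)"
    and Bad: "\<And>s t. s\<in>T \<Longrightarrow> t\<in>T \<Longrightarrow> B (ad s t) = B s + B t"
    and gscl: "\<And>c t. t\<in>T \<Longrightarrow> 0 < c \<Longrightarrow> g (scl c t) = (\<lambda>l. c * g t l)"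
    and Bscl: "\<And>c t. t\<in>T \<Longrightarrow> 0 < c \<Longrightarrow> B (scl c t) = c * B t"
    and KI: "\<And>t. t\<in>T \<Longrightarrow> B t \<le> p (g t)"
  shows "subl V (\<lambda>\<phi>. INF t\<in>T. p (\<lambda>l. \<phi> l + g t l) - B t)"
    and "\<And>\<phi> t. \<phi>\<in>V \<Longrightarrow> t\<in>T \<Longrightarrow> (INF t\<in>T. p (\<lambda>l. \<phi> l + g t l) - B t) \<le> p (\<lambda>l. \<phi> l + g t l) - B t"
proof -
  define r where "r = (\<lambda>\<phi>. INF t\<in>T. p (\<lambda>l. \<phi> l + g t l) - B t)"
  have ra: "\<And>x. r x = (INF t\<in>T. p (\<lambda>l. x l + g t l) - B t)" unfolding r_def by simp
  have TT: "T \<noteq> {}" using t0 by auto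
  have bd: "bdd_below ((\<lambda>t. p (\<lambda>l. x l + g t l) - B t) ` T)" if x: "x \<in> V" for x
  proof (rule bdd_belowI2[where m="- p (\<lambda>l. - x l)"])
    fix t assume t: "t \<in> T"
    have xt: "(\<lambda>l. x l + g t l) \<in> V" using vadd x gV t by blast
    have eq0: "(\<lambda>l. (x l + g t l) + - x l) = g t" by auto
    have "p (g t) \<le> p (\<lambda>l. x l + g t l) + p (\<lambda>l. - x l)"
      using subl_add[OF p xt vneg[OF x]] by (simp add: eq0)
    then show "- p (\<lambda>l. - x l) \<le> p (\<lambda>l. x l + g t l) - B t" using KI[OF t] by linarith
  qed
  have low: "r x \<le> p (\<lambda>l. x l + g t l) - B t" if "x \<in> V" "t \<in> T" for x t
    unfolding ra by (rule cINF_lower[OF bd[OF that(1)] that(2)])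
  then show "\<And>\<phi> t. \<phi>\<in>V \<Longrightarrow> t\<in>T \<Longrightarrow> (INF t\<in>T. p (\<lambda>l. \<phi> l + g t l) - B t) \<le> p (\<lambda>l. \<phi> l + g t l) - B t"
    unfolding ra .
  have rlow: "- p (\<lambda>l. - x l) \<le> r x" if x: "x \<in> V" for x
    unfolding ra
  proof (rule cINF_greatest[OF TT])
    fix t assume t: "t \<in> T"
    have xt: "(\<lambda>l. x l + g t l) \<in> V" using vadd x gV t by blast
    have eq0: "(\<lambda>l. (x l + g t l) + - x l) = g t" by auto
    have "p (g t) \<le> p (\<lambda>l. x l + g t l) + p (\<lambda>l. - x l)"
      using subl_add[OF p xt vneg[OF x]] by (simp add: eq0)
    then show "- p (\<lambda>l. - x l) \<le> p (\<lambda>l. x l + g t l) - B t" using KI[OF t] by linarith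
  qed
  show "subl V (\<lambda>\<phi>. INF t\<in>T. p (\<lambda>l. \<phi> l + g t l) - B t)"
    unfolding r_def[symmetric] subl_def
  proof (intro conjI ballI allI impI)
    fix x1 x2 assume x1: "x1 \<in> V" and x2: "x2 \<in> V"
    have key: "r (\<lambda>l. x1 l + x2 l) \<le> (p (\<lambda>l. x1 l + g t1 l) - B t1) + (p (\<lambda>l. x2 l + g t2 l) - B t2)"
      if t: "t1 \<in> T" "t2 \<in> T" for t1 t2
    proof -
      have "r (\<lambda>l. x1 l + x2 l) \<le> p (\<lambda>l. (x1 l + x2 l) + g (ad t1 t2) l) - B (ad t1 t2)"
        using low[OF vadd[OF x1 x2] adT[OF t]] .
      also have "(\<lambda>l. (x1 l + x2 l) + g (ad t1 t2) l) = (\<lambda>l. (x1 l + g t1 l) + (x2 l + g t2 l))"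
        using gad[OF t] by (auto simp: algebra_simps)
      also have "p \<dots> \<le> p (\<lambda>l. x1 l + g t1 l) + p (\<lambda>l. x2 l + g t2 l)"
        using subl_add[OF p, of "\<lambda>l. x1 l + g t1 l" "\<lambda>l. x2 l + g t2 l"] vadd gV x1 x2 t by auto
      finally show ?thesis using Bad[OF t] by (simp add: algebra_simps)
    qed
    have "r (\<lambda>l. x1 l + x2 l) - r x1 \<le> p (\<lambda>l. x2 l + g t2 l) - B t2" if t2: "t2 \<in> T" for t2
    proof -
      have "r (\<lambda>l. x1 l + x2 l) - (p (\<lambda>l. x2 l + g t2 l) - B t2) \<le> r x1"
        unfolding ra[of x1] by (rule cINF_greatest[OF TT]) (use key t2 in force)
      then show ?thesis by linarith
    qed
    then have "r (\<lambda>l. x1 l + x2 l) - r x1 \<le> r x2"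
      unfolding ra[of x2] by (intro cINF_greatest[OF TT])
    then show "r (\<lambda>l. x1 l + x2 l) \<le> r x1 + r x2" by linarith
  next
    fix c :: real and x assume x: "x \<in> V" and c: "0 \<le> c"
    show "r (\<lambda>l. c * x l) = c * r x"
    proof (cases "c = 0")
      case True
      have "r (\<lambda>l. 0) \<le> p (\<lambda>l. 0 + g t0 l) - B t0" using low[OF vzero t0(1)] .
      then have "r (\<lambda>l. 0) \<le> 0" using t0 subl_zero[OF p] by simp
      moreover have "- p (\<lambda>l. - 0) \<le> r (\<lambda>l. 0)" using rlow[OF vzero] .
      ultimately have "r (\<lambda>l. 0) = 0" using subl_zero[OF p] by simp
      then show ?thesis using True by simp
    next
      case False
      with c have c: "c > 0" by simp
      have cx: "(\<lambda>l. c * x l) \<in> V" using vsc x .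
      show ?thesis
      proof (rule antisym)
        have "r (\<lambda>l. c * x l) / c \<le> p (\<lambda>l. x l + g s l) - B s" if s: "s \<in> T" for s
        proof -
          have "r (\<lambda>l. c * x l) \<le> p (\<lambda>l. c * x l + g (scl c s) l) - B (scl c s)"
            using low[OF cx sclT[OF s c]] .
          also have "(\<lambda>l. c * x l + g (scl c s) l) = (\<lambda>l. c * (x l + g s l))"
            using gscl[OF s c] by (auto simp: algebra_simps)
          also have "p \<dots> = c * p (\<lambda>l. x l + g s l)"
            using subl_sc[OF p vadd[OF x gV[OF s]], of c] c by simp
          finally have "r (\<lambda>l. c * x l) \<le> c * (p (\<lambda>l. x l + g s l) - B s)"
            using Bscl[OF s c] by (simp add: algebra_simps)
          then show ?thesis using c by (simp add: divide_le_eq mult.commute)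
        qed
        then have "r (\<lambda>l. c * x l) / c \<le> r x"
          unfolding ra[of x] by (intro cINF_greatest[OF TT])
        then show "r (\<lambda>l. c * x l) \<le> c * r x" using c by (simp add: divide_le_eq mult.commute)
      next
        show "c * r x \<le> r (\<lambda>l. c * x l)"
          unfolding ra[of "\<lambda>l. c * x l"]
        proof (rule cINF_greatest[OF TT])
          fix t assume t: "t \<in> T"
          have ic: "0 < 1 / c" using c by simp
          have "r x \<le> p (\<lambda>l. x l + g (scl (1/c) t) l) - B (scl (1/c) t)"
            using low[OF x sclT[OF t ic]] .
          also have "\<dots> = p (\<lambda>l. x l + (1/c) * g t l) - (1/c) * B t"
            using gscl[OF t ic] Bscl[OF t ic] by simp
          finally have "c * r x \<le> c * (p (\<lambda>l. x l + (1/c) * g t l) - (1/c) * B t)"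
            using c by simp
          also have "\<dots> = c * p (\<lambda>l. x l + (1/c) * g t l) - B t" using c by (simp add: algebra_simps)
          also have "c * p (\<lambda>l. x l + (1/c) * g t l) = p (\<lambda>l. c * (x l + (1/c) * g t l))"
          proof -
            have mem: "(\<lambda>l. x l + (1/c) * g t l) \<in> V" using vadd[OF x vsc[OF gV[OF t]]] .
            show ?thesis using subl_sc[OF p mem, of c] c by simp
          qed
          also have "(\<lambda>l. c * (x l + (1/c) * g t l)) = (\<lambda>l. c * x l + g t l)"
            using c by (auto simp: algebra_simps)
          finally show "c * r x \<le> p (\<lambda>l. c * x l + g t l) - B t" .
        qed
      qed
    qed
  qed
qed

end


definition cmb :: "('x \<Rightarrow> 'l \<Rightarrow> real) \<Rightarrow> (real \<times> 'x) list \<Rightarrow> 'l \<Rightarrow> real" where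
  "cmb y ts = (\<lambda>l. sum_list (map (\<lambda>p. fst p * y (snd p) l) ts))"
definition Bt :: "('x \<Rightarrow> real) \<Rightarrow> (real \<times> 'x) list \<Rightarrow> real" where
  "Bt b ts = sum_list (map (\<lambda>p. fst p * b (snd p)) ts)"
definition scl :: "real \<Rightarrow> (real \<times> 'x) list \<Rightarrow> (real \<times> 'x) list" where
  "scl c ts = map (\<lambda>p. (c * fst p, snd p)) ts"

lemma cmb_Nil[simp]: "cmb y [] = (\<lambda>l. 0)" by (simp add: cmb_def)
lemma cmb_Cons: "cmb y (p # ts) = (\<lambda>l. fst p * y (snd p) l + cmb y ts l)" by (simp add: cmb_def)
lemma cmb_append: "cmb y (ts1 @ ts2) = (\<lambda>l. cmb y ts1 l + cmb y ts2 l)" by (simp add: cmb_def)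
lemma Bt_Nil[simp]: "Bt b [] = 0" by (simp add: Bt_def)
lemma Bt_append: "Bt b (ts1 @ ts2) = Bt b ts1 + Bt b ts2" by (simp add: Bt_def)
lemma cmb_scl: "cmb y (scl c ts) = (\<lambda>l. c * cmb y ts l)"
proof (rule ext)
  fix l show "cmb y (scl c ts) l = c * cmb y ts l"
    by (induction ts) (auto simp: cmb_def scl_def algebra_simps)
qed
lemma Bt_scl: "Bt b (scl c ts) = c * Bt b ts"
  by (induction ts) (auto simp: Bt_def scl_def algebra_simps)
lemma cmb_single: "cmb y [(1, x)] = y x" by (simp add: cmb_def)
lemma Bt_single: "Bt b [(1, x)] = b x" by (simp add: Bt_def)
lemma cmb_linf: "(\<forall>p\<in>set ts. y (snd p) \<in> linf \<Lambda>) \<Longrightarrow> cmb y ts \<in> linf \<Lambda>"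
  by (induction ts) (auto simp: cmb_Cons intro!: linf_add linf_sc linf_zero)
lemma zero_ts: "(\<forall>p\<in>set ts. fst p = 0) \<Longrightarrow> cmb y ts = (\<lambda>l. 0) \<and> Bt b ts = 0"
  by (induction ts) (auto simp: cmb_Cons Bt_def)

lemma idx: "sum_list (map h ts) = (\<Sum>j=1..length ts. h (ts ! (j - 1)))"
proof -
  have "sum_list (map h ts) = (\<Sum>i<length ts. h (ts ! i))"
    by (simp add: sum_list_sum_nth atLeast0LessThan)
  also have "\<dots> = (\<Sum>j=1..length ts. h (ts ! (j - 1)))"
  proof -
    have "\<And>n. (\<Sum>j=1..n. h (ts ! (j - 1))) = (\<Sum>i<n. h (ts ! i))"
      subgoal for n by (induction n) auto
      done
    then show ?thesis by simp
  qed
  finally show ?thesis .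
qed

lemma cSUP_diffc:
  fixes g :: "'a \<Rightarrow> real"
  assumes "A \<noteq> {}" "bdd_above (g ` A)"
  shows "(SUP a\<in>A. g a - k) = (SUP a\<in>A. g a) - k"
  using cSUP_addc[OF assms, of "- k"] by simp

lemma dual_lin:
  assumes "\<Phi> \<in> linf_dual \<Lambda>" "\<phi> \<in> linf \<Lambda>" "\<psi> \<in> linf \<Lambda>"
  shows "\<Phi> (\<lambda>l. a * \<phi> l + b * \<psi> l) = a * \<Phi> \<phi> + b * \<Phi> \<psi>"
  using assms unfolding linf_dual_def by blast

lemma dual_sum:
  assumes \<Phi>: "\<Phi> \<in> linf_dual \<Lambda>" and A: "finite A" and g: "\<forall>j\<in>A. g j \<in> linf \<Lambda>"
  shows "(\<lambda>l. \<Sum>j\<in>A. c j * g j l) \<in> linf \<Lambda> \<and> \<Phi> (\<lambda>l. \<Sum>j\<in>A. c j * g j l) = (\<Sum>j\<in>A. c j * \<Phi> (g j))"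
  using A g
proof (induction A rule: finite_induct)
  case empty
  have "\<Phi> (\<lambda>l. 0 * 0 + 0 * 0) = 0 * \<Phi> (\<lambda>l. 0) + 0 * \<Phi> (\<lambda>l. 0)"
    using dual_lin[OF \<Phi> linf_zero linf_zero, of 0 0] by simp
  then show ?case by (simp add: linf_zero)
next
  case (insert a F)
  let ?S = "\<lambda>l. \<Sum>j\<in>F. c j * g j l"
  have IH: "?S \<in> linf \<Lambda>" "\<Phi> ?S = (\<Sum>j\<in>F. c j * \<Phi> (g j))" using insert by auto
  have ga: "g a \<in> linf \<Lambda>" using insert by auto
  have "\<Phi> (\<lambda>l. c a * g a l + 1 * ?S l) = c a * \<Phi> (g a) + 1 * \<Phi> ?S"
    by (rule dual_lin[OF \<Phi> ga IH(1)])
  moreover have "(\<lambda>l. \<Sum>j\<in>insert a F. c j * g j l) = (\<lambda>l. c a * g a l + 1 * ?S l)"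
    using insert by simp
  moreover have "(\<lambda>l. c a * g a l + 1 * ?S l) \<in> linf \<Lambda>"
    using linf_add[OF linf_sc[OF ga] linf_sc[OF IH(1)]] .
  ultimately show ?case using insert IH by simp
qed



lemma bdd_diffc:
  fixes g :: "'a \<Rightarrow> real"
  assumes "bdd_above (g ` A)" shows "bdd_above ((\<lambda>a. g a - k) ` A)"
proof -
  obtain M where M: "\<And>a. a \<in> A \<Longrightarrow> g a \<le> M" using assms by (auto simp: bdd_above_def)
  show ?thesis by (rule bdd_aboveI2[where M="M - k"]) (use M in auto)
qed

lemma KI:
  fixes X :: "'x set" and \<Lambda> :: "'l set" and f :: "'x \<Rightarrow> real" and F :: "'l \<Rightarrow> 'x \<Rightarrow> real"
  assumes X: "X \<noteq> {}" and L: "\<Lambda> \<noteq> {}" and hyp: "\<forall>x\<in>X. restrict (\<lambda>l. F l x) \<Lambda> \<in> linf \<Lambda>"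
    and isc: "infsup_convex X \<Lambda> (\<lambda>l x. F l x - f x)"
    and al: "\<forall>x\<in>X. f x + \<alpha> \<le> (SUP l\<in>\<Lambda>. F l x)"
    and ts: "\<forall>p\<in>set ts. 0 \<le> fst p \<and> snd p \<in> X"
  shows "Bt (\<lambda>x. f x + \<alpha>) ts \<le> (SUP l\<in>\<Lambda>. cmb (\<lambda>x. restrict (\<lambda>l. F l x) \<Lambda>) ts l)"
proof -
  let ?y = "\<lambda>x. restrict (\<lambda>l. F l x) \<Lambda>"
  have bdF: "bdd_above ((\<lambda>l. F l x) ` \<Lambda>)" if "x\<in>X" for x
    using linf_bdd[OF hyp[rule_format, OF that]] by simp
  have cmbL: "cmb ?y ts \<in> linf \<Lambda>" by (rule cmb_linf) (use ts hyp in auto)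
  define s where "s = sum_list (map fst ts)"
  have s0: "0 \<le> s" using ts unfolding s_def by (intro sum_list_nonneg) auto
  show ?thesis
  proof (cases "s = 0")
    case True
    then have "\<forall>p\<in>set ts. fst p = 0"
      using sum_list_nonneg_eq_0_iff[of "map fst ts"] ts by (auto simp: s_def)
    then have "cmb ?y ts = (\<lambda>l. 0)" "Bt (\<lambda>x. f x + \<alpha>) ts = 0" using zero_ts by blast+
    then show ?thesis using L by simp
  next
    case False
    then have s: "s > 0" using s0 by simp
    define m where "m = length ts"
    define t where "t = (\<lambda>j. fst (ts ! (j - 1)) / s)"
    define xs where "xs = (\<lambda>j. snd (ts ! (j - 1)))"
    have mem: "ts ! (j - 1) \<in> set ts" if "j \<in> {1..m}" for j using that by (auto simp: m_def)
    have m1: "m \<ge> 1" using False by (cases ts) (auto simp: m_def s_def)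
    have t0: "\<forall>j\<in>{1..m}. t j \<ge> 0" using mem ts s by (auto simp: t_def)
    have xsX: "\<forall>j\<in>{1..m}. xs j \<in> X" using mem ts by (auto simp: xs_def)
    have sidx: "s = (\<Sum>j=1..m. fst (ts!(j-1)))" unfolding s_def m_def by (rule idx)
    have t1: "(\<Sum>j=1..m. t j) = 1"
    proof -
      have "(\<Sum>j=1..m. t j) = (\<Sum>j=1..m. fst (ts!(j-1))) / s"
        unfolding t_def by (rule sum_divide_distrib[symmetric])
      also have "\<dots> = 1" by (subst sidx[symmetric]) (use s in simp)
      finally show ?thesis .
    qed
    have ic: "(INF x\<in>X. SUP l\<in>\<Lambda>. ereal (F l x - f x)) \<le> (SUP l\<in>\<Lambda>. ereal (\<Sum>j=1..m. t j * (F l (xs j) - f (xs j))))"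
      using isc[unfolded infsup_convex_def, rule_format, of m t xs] m1 t0 t1 xsX by blast
    define FS where "FS = (\<Sum>j=1..m. fst (ts!(j-1)) * f (xs j))"
    define P where "P = (SUP l\<in>\<Lambda>. cmb ?y ts l)"
    have cmbj: "cmb ?y ts l = (\<Sum>j=1..m. fst (ts!(j-1)) * F l (xs j))" if "l \<in> \<Lambda>" for l
    proof -
      have "cmb ?y ts l = (\<Sum>j=1..m. fst (ts!(j-1)) * ?y (snd (ts!(j-1))) l)"
        unfolding cmb_def m_def using idx[of "\<lambda>p. fst p * ?y (snd p) l" ts] by simp
      then show ?thesis using that by (simp add: xs_def)
    qed
    have hj: "(\<Sum>j=1..m. t j * (F l (xs j) - f (xs j))) = (1/s) * cmb ?y ts l - FS / s" if "l\<in>\<Lambda>" for l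
    proof -
      have "(\<Sum>j=1..m. t j * (F l (xs j) - f (xs j))) = (\<Sum>j=1..m. fst (ts!(j-1)) * F l (xs j) - fst (ts!(j-1)) * f (xs j)) / s"
        by (simp add: t_def sum_divide_distrib right_diff_distrib diff_divide_distrib)
      also have "\<dots> = ((\<Sum>j=1..m. fst (ts!(j-1)) * F l (xs j)) - FS) / s"
        by (simp add: sum_subtractf FS_def)
      also have "\<dots> = (1/s) * cmb ?y ts l - FS / s"
        using cmbj[OF that] by (simp add: diff_divide_distrib)
      finally show ?thesis .
    qed
    have bd1: "bdd_above ((\<lambda>l. (1/s) * cmb ?y ts l) ` \<Lambda>)"
      using linf_bdd[OF linf_sc[OF cmbL]] .
    have "(SUP l\<in>\<Lambda>. ereal (\<Sum>j=1..m. t j * (F l (xs j) - f (xs j)))) = (SUP l\<in>\<Lambda>. ereal ((1/s) * cmb ?y ts l - FS / s))"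
      by (rule SUP_cong) (use hj in auto)
    also have "\<dots> = ereal (SUP l\<in>\<Lambda>. (1/s) * cmb ?y ts l - FS / s)"
      by (rule ereal_SUP_bdd[OF L bdd_diffc[OF bd1]])
    also have "(SUP l\<in>\<Lambda>. (1/s) * cmb ?y ts l - FS / s) = (1/s) * P - FS / s"
      unfolding P_def using cSUP_diffc[OF L bd1] cSUP_cmult[OF L linf_bdd[OF cmbL], of "1/s"] s by simp
    finally have rhs: "(SUP l\<in>\<Lambda>. ereal (\<Sum>j=1..m. t j * (F l (xs j) - f (xs j)))) = ereal ((1/s) * P - FS / s)" .
    have lhs: "ereal \<alpha> \<le> (INF x\<in>X. SUP l\<in>\<Lambda>. ereal (F l x - f x))"
    proof (rule INF_greatest)
      fix x assume x: "x \<in> X"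
      have "(SUP l\<in>\<Lambda>. ereal (F l x - f x)) = ereal (SUP l\<in>\<Lambda>. F l x - f x)"
        by (rule ereal_SUP_bdd[OF L bdd_diffc[OF bdF[OF x]]])
      also have "(SUP l\<in>\<Lambda>. F l x - f x) = (SUP l\<in>\<Lambda>. F l x) - f x"
        by (rule cSUP_diffc[OF L bdF[OF x]])
      moreover have "\<alpha> \<le> (SUP l\<in>\<Lambda>. F l x) - f x" using al x by fastforce
      ultimately show "ereal \<alpha> \<le> (SUP l\<in>\<Lambda>. ereal (F l x - f x))" by simp
    qed
    have "ereal \<alpha> \<le> ereal ((1/s) * P - FS / s)" using order_trans[OF lhs ic] unfolding rhs .
    then have "\<alpha> \<le> (1/s) * P - FS / s" by simp
    then have "s * \<alpha> \<le> s * ((1/s) * P - FS / s)" using s by simp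
    also have "\<dots> = P - FS" using s by (simp add: field_simps)
    finally have main: "s * \<alpha> + FS \<le> P" by simp
    have "Bt (\<lambda>x. f x + \<alpha>) ts = (\<Sum>j=1..m. fst (ts!(j-1)) * (f (xs j) + \<alpha>))"
      unfolding Bt_def m_def xs_def by (rule idx)
    also have "\<dots> = FS + s * \<alpha>"
      by (simp add: FS_def sidx distrib_left sum.distrib sum_distrib_right)
    finally show ?thesis using main P_def by simp
  qed
qed



theorem theorem3p2:
  fixes X :: "'x set" and \<Lambda> :: "'l set"
    and f :: "'x \<Rightarrow> real" and F :: "'l \<Rightarrow> 'x \<Rightarrow> real"
  assumes "X \<noteq> {}" and "\<Lambda> \<noteq> {}"
    and "\<forall>x\<in>X. restrict (\<lambda>l. F l x) \<Lambda> \<in> linf \<Lambda>"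
  shows "infsup_convex X \<Lambda> (\<lambda>l x. F l x - f x) \<longleftrightarrow>
    (\<forall>\<alpha>::real. (\<forall>x\<in>X. f x + \<alpha> \<le> (SUP l\<in>\<Lambda>. F l x)) \<longrightarrow>
       (\<exists>\<Phi>\<in>Delta_set \<Lambda>. \<forall>x\<in>X. f x + \<alpha> \<le> \<Phi> (restrict (\<lambda>l. F l x) \<Lambda>)))"
proof -
  define y where "y = (\<lambda>x. restrict (\<lambda>l. F l x) \<Lambda>)"
  have yL: "\<And>x. x\<in>X \<Longrightarrow> y x \<in> linf \<Lambda>" using assms(3) y_def by auto
  have bdF: "bdd_above ((\<lambda>l. F l x) ` \<Lambda>)" if "x\<in>X" for x
    using linf_bdd[OF yL[OF that]] by (simp add: y_def)
  have Gx: "(SUP l\<in>\<Lambda>. ereal (F l x - f x)) = ereal ((SUP l\<in>\<Lambda>. F l x) - f x)" if x: "x \<in> X" for x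
  proof -
    have "(SUP l\<in>\<Lambda>. ereal (F l x - f x)) = ereal (SUP l\<in>\<Lambda>. F l x - f x)"
      by (rule ereal_SUP_bdd[OF assms(2) bdd_diffc[OF bdF[OF x]]])
    also have "(SUP l\<in>\<Lambda>. F l x - f x) = (SUP l\<in>\<Lambda>. F l x) - f x"
      by (rule cSUP_diffc[OF assms(2) bdF[OF x]])
    finally show ?thesis .
  qed
  show ?thesis
  proof
    assume isc: "infsup_convex X \<Lambda> (\<lambda>l x. F l x - f x)"
    show "\<forall>\<alpha>::real. (\<forall>x\<in>X. f x + \<alpha> \<le> (SUP l\<in>\<Lambda>. F l x)) \<longrightarrow>
       (\<exists>\<Phi>\<in>Delta_set \<Lambda>. \<forall>x\<in>X. f x + \<alpha> \<le> \<Phi> (restrict (\<lambda>l. F l x) \<Lambda>))"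
    proof (intro allI impI)
      fix \<alpha> :: real assume al: "\<forall>x\<in>X. f x + \<alpha> \<le> (SUP l\<in>\<Lambda>. F l x)"
      define T where "T = {ts :: (real \<times> 'x) list. \<forall>p\<in>set ts. 0 \<le> fst p \<and> snd p \<in> X}"
      define p where "p = (\<lambda>\<phi>::'l\<Rightarrow>real. SUP l\<in>\<Lambda>. \<phi> l)"
      define b where "b = (\<lambda>x. f x + \<alpha>)"
      interpret V: vsp "linf \<Lambda>" by (rule vsp_linf)
      have psub: "subl (linf \<Lambda>) p" unfolding p_def by (rule subl_p[OF assms(2)])
      have KI': "Bt b ts \<le> p (cmb y ts)" if "ts \<in> T" for ts
        using KI[OF assms(1,2,3) isc al, of ts] that unfolding T_def p_def b_def y_def by blast
      have gV: "cmb y ts \<in> linf \<Lambda>" if "ts \<in> T" for ts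
        by (rule cmb_linf) (use that yL in \<open>auto simp: T_def\<close>)
      have adT: "s @ t \<in> T" if "s \<in> T" "t \<in> T" for s t using that by (auto simp: T_def)
      have sclT: "scl c t \<in> T" if "t \<in> T" "0 < c" for c t using that by (auto simp: T_def scl_def)
      have T0: "[] \<in> T" by (simp add: T_def)
      define q0 where "q0 = (\<lambda>\<phi>. INF t\<in>T. p (\<lambda>l. \<phi> l + cmb y t l) - Bt b t)"
      have q0sub: "subl (linf \<Lambda>) q0" unfolding q0_def
        by (rule V.inf_subl(1)[where p=p and T=T and ad="(@)" and scl=scl and g="cmb y" and B="Bt b"])
          (fact psub T0 cmb_Nil Bt_Nil gV adT sclT cmb_append Bt_append cmb_scl Bt_scl KI' | simp add: cmb_append Bt_append cmb_scl Bt_scl | blast intro: KI')+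
      have low: "q0 \<phi> \<le> p (\<lambda>l. \<phi> l + cmb y t l) - Bt b t" if "\<phi> \<in> linf \<Lambda>" "t \<in> T" for \<phi> t
        unfolding q0_def
        by (rule V.inf_subl(2)[where p=p and T=T and ad="(@)" and scl=scl and g="cmb y" and B="Bt b"])
          (fact psub T0 cmb_Nil Bt_Nil gV adT sclT cmb_append Bt_append cmb_scl Bt_scl KI' that | simp add: cmb_append Bt_append cmb_scl Bt_scl | blast intro: KI')+
      obtain L where Llin: "\<forall>\<phi>\<in>linf \<Lambda>. \<forall>\<psi>\<in>linf \<Lambda>. \<forall>a b. L (\<lambda>l. a * \<phi> l + b * \<psi> l) = a * L \<phi> + b * L \<psi>"
        and Lq: "\<forall>\<phi>\<in>linf \<Lambda>. L \<phi> \<le> q0 \<phi>"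
        using V.hb_core[OF q0sub] by blast
      have Lp: "L \<phi> \<le> p \<phi>" if "\<phi> \<in> linf \<Lambda>" for \<phi>
      proof -
        have "q0 \<phi> \<le> p \<phi>" using low[OF that T0] by simp
        then show ?thesis using Lq that by fastforce
      qed
      have Lneg: "L (\<lambda>l. - \<phi> l) = - L \<phi>" if "\<phi> \<in> linf \<Lambda>" for \<phi>
        using Llin[rule_format, OF that that, of "-1" 0] by simp
      have p0: "p (\<lambda>l. 0) = 0" unfolding p_def using assms(2) by simp
      show "\<exists>\<Phi>\<in>Delta_set \<Lambda>. \<forall>x\<in>X. f x + \<alpha> \<le> \<Phi> (restrict (\<lambda>l. F l x) \<Lambda>)"
      proof (intro bexI ballI)
        fix x assume x: "x \<in> X"
        have xT: "[(1, x)] \<in> T" using x by (simp add: T_def)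
        have "L (\<lambda>l. - y x l) \<le> q0 (\<lambda>l. - y x l)" using Lq linf_sc[OF yL[OF x], of "-1"] by auto
        also have "\<dots> \<le> p (\<lambda>l. - y x l + cmb y [(1, x)] l) - Bt b [(1, x)]"
          by (rule low[OF _ xT]) (use linf_sc[OF yL[OF x], of "-1"] in simp)
        also have "\<dots> = - b x" by (simp add: cmb_single Bt_single p0)
        finally have "b x \<le> L (y x)" using Lneg[OF yL[OF x]] by simp
        then show "f x + \<alpha> \<le> L (restrict (\<lambda>l. F l x) \<Lambda>)" by (simp add: b_def y_def)
      next
        show "L \<in> Delta_set \<Lambda>"
          unfolding Delta_set_def linf_dual_def
        proof (intro CollectI conjI)
          show "\<forall>\<phi>\<in>linf \<Lambda>. \<forall>\<psi>\<in>linf \<Lambda>. \<forall>a b. L (\<lambda>l. a * \<phi> l + b * \<psi> l) = a * L \<phi> + b * L \<psi>"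
            by (rule Llin)
          show "\<forall>\<phi>\<in>linf \<Lambda>. L \<phi> \<le> (SUP l\<in>\<Lambda>. \<phi> l)" using Lp by (simp add: p_def)
          show "\<exists>C. \<forall>\<phi>\<in>linf \<Lambda>. \<bar>L \<phi>\<bar> \<le> C * linf_norm \<Lambda> \<phi>"
          proof (intro exI ballI)
            fix \<phi> assume \<phi>: "\<phi> \<in> linf \<Lambda>"
            have n1: "L \<phi> \<le> linf_norm \<Lambda> \<phi>" using Lp[OF \<phi>] p_le_norm[OF assms(2) \<phi>] by (simp add: p_def)
            have nphi: "(\<lambda>l. - \<phi> l) \<in> linf \<Lambda>" using linf_sc[OF \<phi>, of "-1"] by simp
            have n2: "- L \<phi> \<le> linf_norm \<Lambda> \<phi>"
              using Lp[OF nphi] p_le_norm[OF assms(2) nphi] Lneg[OF \<phi>] linf_norm_neg[of \<Lambda> \<phi>]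
              by (simp add: p_def)
            show "\<bar>L \<phi>\<bar> \<le> 1 * linf_norm \<Lambda> \<phi>" using n1 n2 by simp
          qed
        qed
      qed
    qed
  next
    assume H: "\<forall>\<alpha>::real. (\<forall>x\<in>X. f x + \<alpha> \<le> (SUP l\<in>\<Lambda>. F l x)) \<longrightarrow>
       (\<exists>\<Phi>\<in>Delta_set \<Lambda>. \<forall>x\<in>X. f x + \<alpha> \<le> \<Phi> (restrict (\<lambda>l. F l x) \<Lambda>))"
    show "infsup_convex X \<Lambda> (\<lambda>l x. F l x - f x)"
      unfolding infsup_convex_def
    proof (intro allI impI, elim conjE)
      fix m :: nat and t :: "nat \<Rightarrow> real" and xs :: "nat \<Rightarrow> 'x"
      assume m1: "1 \<le> m" and t0: "\<forall>j\<in>{1..m}. 0 \<le> t j" and t1: "(\<Sum>j = 1..m. t j) = 1"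
        and xsX: "\<forall>j\<in>{1..m}. xs j \<in> X"
      have t1': "sum t {Suc 0..m} = 1" using t1 by simp
      define \<beta> where "\<beta> = (INF x\<in>X. SUP l\<in>\<Lambda>. ereal (F l x - f x))"
      obtain x0 where x0: "x0 \<in> X" using assms(1) by auto
      have "\<beta> \<le> (SUP l\<in>\<Lambda>. ereal (F l x0 - f x0))" unfolding \<beta>_def using x0 by (rule INF_lower)
      then have bPI: "\<beta> \<noteq> \<infinity>" using Gx[OF x0] by auto
      have "\<beta> \<le> (SUP l\<in>\<Lambda>. ereal (\<Sum>j = 1..m. t j * (F l (xs j) - f (xs j))))"
      proof (cases \<beta>)
        case MInf then show ?thesis by simp
      next
        case PInf then show ?thesis using bPI by simp
      next
        case (real a)
        have fa: "f x + a \<le> (SUP l\<in>\<Lambda>. F l x)" if x: "x \<in> X" for x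
        proof -
          have "\<beta> \<le> (SUP l\<in>\<Lambda>. ereal (F l x - f x))" unfolding \<beta>_def using x by (rule INF_lower)
          then have "a \<le> (SUP l\<in>\<Lambda>. F l x) - f x" using real Gx[OF x] by simp
          then show ?thesis by simp
        qed
        obtain \<Phi> where \<Phi>D: "\<Phi> \<in> Delta_set \<Lambda>" and \<Phi>x: "\<forall>x\<in>X. f x + a \<le> \<Phi> (y x)"
          using H fa unfolding y_def by blast
        have \<Phi>d: "\<Phi> \<in> linf_dual \<Lambda>" and \<Phi>s: "\<forall>\<phi>\<in>linf \<Lambda>. \<Phi> \<phi> \<le> (SUP l\<in>\<Lambda>. \<phi> l)"
          using \<Phi>D unfolding Delta_set_def by auto
        define \<psi> where "\<psi> = (\<lambda>l. \<Sum>j\<in>{1..m}. t j * y (xs j) l)"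
        have ds: "\<psi> \<in> linf \<Lambda> \<and> \<Phi> \<psi> = (\<Sum>j\<in>{1..m}. t j * \<Phi> (y (xs j)))"
          unfolding \<psi>_def by (rule dual_sum[OF \<Phi>d]) (use xsX yL in auto)
        define Q where "Q = (\<lambda>l. \<Sum>j=1..m. t j * F l (xs j))"
        define K where "K = (\<Sum>j=1..m. t j * f (xs j))"
        have \<psi>Q: "\<psi> l = Q l" if "l \<in> \<Lambda>" for l using that by (simp add: \<psi>_def Q_def y_def)
        have imQ: "\<psi> ` \<Lambda> = Q ` \<Lambda>" by (rule image_cong) (use \<psi>Q in auto)
        have bdQ: "bdd_above (Q ` \<Lambda>)" using linf_bdd[of \<psi> \<Lambda>] ds imQ by simp
        have "(\<Sum>j=1..m. t j * (f (xs j) + a)) \<le> (\<Sum>j=1..m. t j * \<Phi> (y (xs j)))"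
          by (rule sum_mono) (use t0 xsX \<Phi>x in \<open>auto intro: mult_left_mono\<close>)
        also have "\<dots> = \<Phi> \<psi>" using ds by simp
        also have "\<dots> \<le> (SUP l\<in>\<Lambda>. \<psi> l)" using \<Phi>s ds by blast
        also have "\<dots> = (SUP l\<in>\<Lambda>. Q l)" by (rule SUP_cong) (use \<psi>Q in auto)
        finally have "K + a \<le> (SUP l\<in>\<Lambda>. Q l)"
          by (simp add: K_def distrib_left sum.distrib sum_distrib_right[symmetric] t1')
        then have "a \<le> (SUP l\<in>\<Lambda>. Q l - K)" using cSUP_diffc[OF assms(2) bdQ, of K] by simp
        then have "ereal a \<le> (SUP l\<in>\<Lambda>. ereal (Q l - K))"
          using ereal_SUP_bdd[OF assms(2) bdd_diffc[OF bdQ, of K]] by simp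
        also have "(SUP l\<in>\<Lambda>. ereal (Q l - K)) = (SUP l\<in>\<Lambda>. ereal (\<Sum>j = 1..m. t j * (F l (xs j) - f (xs j))))"
          by (rule SUP_cong) (auto simp: Q_def K_def right_diff_distrib sum_subtractf)
        finally show ?thesis using real by simp
      qed
      then show "(INF x\<in>X. SUP l\<in>\<Lambda>. ereal (F l x - f x)) \<le> (SUP l\<in>\<Lambda>. ereal (\<Sum>j = 1..m. t j * (F l (xs j) - f (xs j))))"
        by (simp add: \<beta>_def)
    qed
  qed
qed


end
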